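(* Let $M$ be a matroid flock of rank $d$ on a finite set $E$, and let $g=g^M$. Then (1) $g(\alpha)+g(\beta)\ge g(\alpha\vee\beta)+g(\alpha\wedge\beta)$ for all $\alpha,\beta\in\mathbb{Z}^E$; and (2) $g(\alpha+\mathbf{1})=g(\alpha)+d$ for all $\alpha\in\mathbb{Z}^E$.
   Context: $\alpha\vee\beta$ and $\alpha\wedge\beta$ are the coordinatewise maximum and minimum. $e_I:=\sum_{i\in I}e_i$ ($e_i$ unit vectors), $\mathbf{1}:=e_E$. A matroid flock of rank $d$ on $E$ is a map $M$ assigning to each $\alpha\in\mathbb{Z}^E$ a matroid $M_\alpha$ on $E$ of rank $d$ with (MF1) $M_\alpha/i=M_{\alpha+e_i}\setminus i$ for all $\alpha$, $i$ (contraction, deletion); and (MF2) $M_\alpha=M_{\alpha+\mathbf{1}}$. With $r_\alpha$ the rank function of $M_\alpha$, $g^M$ is the unique function $g:\mathbb{Z}^E\to\mathbb{Z}$ with $g(0)=0$ and $g(\alpha+e_I)=g(\alpha)+r_\alpha(I)$ for all $\alpha\in\mathbb{Z}^E$, $I\subseteq E$. *)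

theory Defs
  imports Main
begin

definition matroid :: "'a set \<Rightarrow> 'a set set \<Rightarrow> bool" where
  "matroid E Ind \<longleftrightarrow> finite E \<and> Ind \<subseteq> Pow E \<and> {} \<in> Ind
     \<and> (\<forall>I J. J \<in> Ind \<longrightarrow> I \<subseteq> J \<longrightarrow> I \<in> Ind)
     \<and> (\<forall>I J. I \<in> Ind \<longrightarrow> J \<in> Ind \<longrightarrow> card I < card J \<longrightarrow>
            (\<exists>x \<in> J - I. insert x I \<in> Ind))"

definition mrank :: "'a set set \<Rightarrow> 'a set \<Rightarrow> nat" where
  "mrank Ind X = Max (card ` {I \<in> Ind. I \<subseteq> X})"

definition mdelete :: "'a set set \<Rightarrow> 'a \<Rightarrow> 'a set set" where
  "mdelete Ind i = {I \<in> Ind. i \<notin> I}"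

definition mcontract :: "'a set set \<Rightarrow> 'a \<Rightarrow> 'a set set" where
  "mcontract Ind i = (if {i} \<in> Ind then {I. i \<notin> I \<and> insert i I \<in> Ind} else mdelete Ind i)"

definition shift :: "('a \<Rightarrow> int) \<Rightarrow> 'a set \<Rightarrow> ('a \<Rightarrow> int)" where
  "shift \<alpha> I = (\<lambda>x. \<alpha> x + (if x \<in> I then 1 else 0))"

text \<open>Matroid flock of rank d on the finite ground set E = UNIV of a finite type.\<close>
definition matroid_flock :: "nat \<Rightarrow> (('a::finite \<Rightarrow> int) \<Rightarrow> 'a set set) \<Rightarrow> bool" where
  "matroid_flock d M \<longleftrightarrow>
     (\<forall>\<alpha>. matroid UNIV (M \<alpha>) \<and> mrank (M \<alpha>) UNIV = d)
     \<and> (\<forall>\<alpha> i. mcontract (M \<alpha>) i = mdelete (M (shift \<alpha> {i})) i)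
     \<and> (\<forall>\<alpha>. M \<alpha> = M (shift \<alpha> UNIV))"

definition gM :: "(('a::finite \<Rightarrow> int) \<Rightarrow> 'a set set) \<Rightarrow> ('a \<Rightarrow> int) \<Rightarrow> int" where
  "gM M = (THE g. g (\<lambda>_. 0) = 0 \<and>
              (\<forall>\<alpha> I. g (shift \<alpha> I) = g \<alpha> + int (mrank (M \<alpha>) I)))"

end

theory Submission
  imports Defs
begin

lemma fin_fam: "finite (F :: ('a::finite) set set)" by simp

lemma mrank_ge: "{} \<in> F \<Longrightarrow> I \<in> F \<Longrightarrow> I \<subseteq> X \<Longrightarrow> card I \<le> mrank F (X::'a::finite set)"
  unfolding mrank_def by (rule Max_ge) auto

lemma mrank_ex: "{} \<in> F \<Longrightarrow> \<exists>I\<in>F. I \<subseteq> (X::'a::finite set) \<and> card I = mrank F X"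
proof -
  assume "{} \<in> F"
  then have "mrank F X \<in> card ` {I \<in> F. I \<subseteq> X}" unfolding mrank_def
    by (intro Max_in) auto
  then show ?thesis by auto
qed

lemma mrank_eqI: "I \<in> F \<Longrightarrow> I \<subseteq> X \<Longrightarrow> (\<And>J. J \<in> F \<Longrightarrow> J \<subseteq> X \<Longrightarrow> card J \<le> card I)
   \<Longrightarrow> mrank F (X::'a::finite set) = card I"
  unfolding mrank_def by (intro Max_eqI) auto

lemma m_empty: "matroid E Ind \<Longrightarrow> {} \<in> Ind" unfolding matroid_def by blast
lemma m_sub: "matroid E Ind \<Longrightarrow> J \<in> Ind \<Longrightarrow> I \<subseteq> J \<Longrightarrow> I \<in> Ind" unfolding matroid_def by blast
lemma m_aug: "matroid E Ind \<Longrightarrow> I \<in> Ind \<Longrightarrow> J \<in> Ind \<Longrightarrow> card I < card J \<Longrightarrow> \<exists>x\<in>J - I. insert x I \<in> Ind"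
  unfolding matroid_def by blast

lemma contract_rank:
  fixes Ind :: "('a::finite) set set"
  assumes m: "matroid UNIV Ind" and iY: "i \<notin> Y"
  shows "mrank (mcontract Ind i) Y + mrank Ind {i} = mrank Ind (insert i Y)"
proof (cases "{i} \<in> Ind")
  case True
  have r1: "mrank Ind {i} = 1"
  proof -
    have "mrank Ind {i} = card {i}"
      by (rule mrank_eqI[OF True]) (auto intro: card_mono[of "{i}", simplified])
    then show ?thesis by simp
  qed
  define C where "C = {I. i \<notin> I \<and> insert i I \<in> Ind}"
  have mc: "mcontract Ind i = C" using True unfolding mcontract_def C_def by simp
  have e: "{} \<in> C" using True unfolding C_def by simp
  obtain J where J: "J \<in> C" "J \<subseteq> Y" "card J = mrank C Y" using mrank_ex[OF e] by blast
  have "card (insert i J) \<le> mrank Ind (insert i Y)"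
    using J m_empty[OF m] by (intro mrank_ge) (auto simp: C_def)
  moreover have "card (insert i J) = card J + 1" using J by (simp add: C_def)
  ultimately have le1: "mrank C Y + 1 \<le> mrank Ind (insert i Y)" using J by simp
  obtain B where B: "B \<in> Ind" "B \<subseteq> insert i Y" "card B = mrank Ind (insert i Y)"
    using mrank_ex[OF m_empty[OF m]] by blast
  define F where "F = {D \<in> Ind. i \<in> D \<and> D \<subseteq> insert i Y}"
  have "Max (card ` F) \<in> card ` F" using True by (intro Max_in) (auto simp: F_def)
  then obtain Cm where Cm: "Cm \<in> F" "card Cm = Max (card ` F)" by auto
  have Cmax: "card D \<le> card Cm" if "D \<in> F" for D using that Cm by simp
  have "card B \<le> card Cm"
  proof (rule ccontr)
    assume "\<not> card B \<le> card Cm"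
    then obtain x where x: "x \<in> B - Cm" "insert x Cm \<in> Ind"
      using m_aug[OF m, of Cm B] Cm B by (auto simp: F_def)
    then have "insert x Cm \<in> F" using Cm B by (auto simp: F_def)
    then have "card (insert x Cm) \<le> card Cm" by (rule Cmax)
    then show False using x by simp
  qed
  moreover have "Cm - {i} \<in> C" "Cm - {i} \<subseteq> Y" using Cm by (auto simp: F_def C_def insert_absorb)
  moreover have "card Cm = card (Cm - {i}) + 1"
  proof -
    have "i \<in> Cm" using Cm by (simp add: F_def)
    then show ?thesis using card_Suc_Diff1[of Cm i] by simp
  qed
  ultimately have "mrank Ind (insert i Y) \<le> mrank C Y + 1"
    using mrank_ge[OF e, of "Cm - {i}" Y] B by linarith
  then show ?thesis using le1 r1 mc by simp
next
  case False
  have noi: "i \<notin> I" if "I \<in> Ind" for I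
    using m_sub[OF m that, of "{i}"] False that by auto
  have r0: "mrank Ind {i} = 0"
  proof -
    have "mrank Ind {i} = card ({}::'a set)"
    proof (rule mrank_eqI[OF m_empty[OF m]])
      fix J assume "J \<in> Ind" "J \<subseteq> {i}"
      then have "J = {}" using noi by auto
      then show "card J \<le> card {}" by simp
    qed auto
    then show ?thesis by simp
  qed
  have mc: "mcontract Ind i = mdelete Ind i" using False unfolding mcontract_def by simp
  have "{I \<in> mdelete Ind i. I \<subseteq> Y} = {I \<in> Ind. I \<subseteq> insert i Y}"
    using noi iY unfolding mdelete_def by auto
  then show ?thesis using mc r0 unfolding mrank_def by simp
qed


lemma shift_empty[simp]: "shift \<alpha> {} = \<alpha>" by (simp add: shift_def)

lemma shift_shift: "A \<inter> B = {} \<Longrightarrow> shift (shift \<alpha> A) B = shift \<alpha> (A \<union> B)"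
  by (auto simp: shift_def fun_eq_iff)

lemma K:
  fixes r :: "('a::finite \<Rightarrow> int) \<Rightarrow> 'a set \<Rightarrow> int"
  assumes r0: "\<And>\<gamma>. r \<gamma> {} = 0"
    and K1: "\<And>\<gamma> i Y. i \<notin> Y \<Longrightarrow> r (shift \<gamma> {i}) Y + r \<gamma> {i} = r \<gamma> (insert i Y)"
  shows "X \<inter> Y = {} \<Longrightarrow> r (shift \<gamma> X) Y + r \<gamma> X = r \<gamma> (X \<union> Y)"
proof (induction X arbitrary: \<gamma> Y rule: finite_induct[OF finite])
  case 1 then show ?case by (simp add: r0)
next
  case (2 i X')
  have sh: "shift \<gamma> (insert i X') = shift (shift \<gamma> {i}) X'"
    using 2 by (simp add: shift_shift)
  have IH: "r (shift (shift \<gamma> {i}) X') Y + r (shift \<gamma> {i}) X' = r (shift \<gamma> {i}) (X' \<union> Y)"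
    using 2 by blast
  have a: "r (shift \<gamma> {i}) (X' \<union> Y) + r \<gamma> {i} = r \<gamma> (insert i (X' \<union> Y))"
    using 2 by (intro K1) auto
  have b: "r (shift \<gamma> {i}) X' + r \<gamma> {i} = r \<gamma> (insert i X')"
    using 2 by (intro K1) auto
  show ?case using IH a b sh by simp
qed

lemma Q:
  fixes r :: "('a::finite \<Rightarrow> int) \<Rightarrow> 'a set \<Rightarrow> int"
  assumes r0: "\<And>\<gamma>. r \<gamma> {} = 0"
    and K1: "\<And>\<gamma> i Y. i \<notin> Y \<Longrightarrow> r (shift \<gamma> {i}) Y + r \<gamma> {i} = r \<gamma> (insert i Y)"
  shows "r \<alpha> (A \<union> B) + r (shift \<alpha> (A \<union> B)) (A \<inter> B) = r \<alpha> A + r (shift \<alpha> A) B"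
proof -
  have k1: "r (shift (shift \<alpha> A) (B - A)) (A \<inter> B) + r (shift \<alpha> A) (B - A) = r (shift \<alpha> A) ((B - A) \<union> (A \<inter> B))"
    by (rule K[OF r0 K1]) auto
  have k2: "r (shift \<alpha> A) (B - A) + r \<alpha> A = r \<alpha> (A \<union> (B - A))"
    by (rule K[OF r0 K1]) auto
  have e1: "shift (shift \<alpha> A) (B - A) = shift \<alpha> (A \<union> B)" by (simp add: shift_shift Un_Diff_cancel)
  have e2: "(B - A) \<union> (A \<inter> B) = B" by auto
  show ?thesis using k1 k2 e1 e2 by (simp add: Un_Diff_cancel)
qed

definition Sset :: "('a \<Rightarrow> int) \<Rightarrow> ('a \<Rightarrow> int) \<Rightarrow> 'a set" where "Sset \<alpha> \<beta> = {x. \<alpha> x < \<beta> x}"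
definition Dist :: "('a::finite \<Rightarrow> int) \<Rightarrow> ('a \<Rightarrow> int) \<Rightarrow> nat" where
  "Dist \<alpha> \<beta> = (\<Sum>x\<in>UNIV. nat (\<beta> x - \<alpha> x))"

lemma Dist_shift: "I \<noteq> {} \<Longrightarrow> I \<subseteq> Sset \<alpha> \<beta> \<Longrightarrow> Dist (shift \<alpha> I) \<beta> < Dist \<alpha> \<beta>"
  unfolding Dist_def
proof (rule sum_strict_mono_ex1)
  assume "I \<noteq> {}" "I \<subseteq> Sset \<alpha> \<beta>"
  then obtain a where "a \<in> I" "\<alpha> a < \<beta> a" by (auto simp: Sset_def)
  then show "\<exists>a\<in>UNIV. nat (\<beta> a - shift \<alpha> I a) < nat (\<beta> a - \<alpha> a)" by (auto simp: shift_def)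
qed (auto simp: shift_def)

function W :: "(('a::finite \<Rightarrow> int) \<Rightarrow> 'a set \<Rightarrow> int) \<Rightarrow> ('a \<Rightarrow> int) \<Rightarrow> ('a \<Rightarrow> int) \<Rightarrow> int" where
  "W r \<alpha> \<beta> = (if Sset \<alpha> \<beta> = {} then 0 else r \<alpha> (Sset \<alpha> \<beta>) + W r (shift \<alpha> (Sset \<alpha> \<beta>)) \<beta>)"
  by auto
termination by (relation "measure (\<lambda>(r,\<alpha>,\<beta>). Dist \<alpha> \<beta>)") (auto intro: Dist_shift)

declare W.simps[simp del]

lemma W_unfold: "(\<And>\<gamma>. r \<gamma> {} = 0) \<Longrightarrow> W r \<alpha> \<beta> = r \<alpha> (Sset \<alpha> \<beta>) + W r (shift \<alpha> (Sset \<alpha> \<beta>)) \<beta>"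
  apply (cases "Sset \<alpha> \<beta> = {}")
   apply simp
  apply (subst W.simps)
  apply simp
  done

lemma W_P:
  fixes r :: "('a::finite \<Rightarrow> int) \<Rightarrow> 'a set \<Rightarrow> int"
  assumes r0: "\<And>\<gamma>. r \<gamma> {} = 0"
    and Qr: "\<And>\<alpha> A B. r \<alpha> (A \<union> B) + r (shift \<alpha> (A \<union> B)) (A \<inter> B) = r \<alpha> A + r (shift \<alpha> A) B"
  shows "I \<subseteq> Sset \<alpha> \<beta> \<Longrightarrow> W r \<alpha> \<beta> = r \<alpha> I + W r (shift \<alpha> I) \<beta>"
proof (induction "Dist \<alpha> \<beta>" arbitrary: \<alpha> I rule: less_induct)
  case less
  show ?case
  proof (cases "I = {}")
    case True then show ?thesis by (simp add: r0)
  next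
    case False
    define S where "S = Sset \<alpha> \<beta>"
    define T where "T = Sset (shift \<alpha> I) \<beta>"
    have SIT: "S = I \<union> T" using less.prems by (auto simp: S_def T_def Sset_def shift_def)
    have IT: "I \<inter> T \<subseteq> Sset (shift \<alpha> S) \<beta>" using less.prems
      by (auto simp: S_def T_def Sset_def shift_def)
    have sh: "shift (shift \<alpha> S) (I \<inter> T) = shift (shift \<alpha> I) T"
      using SIT by (auto simp: shift_def fun_eq_iff)
    have Sne: "S \<noteq> {}" using False less.prems S_def by auto
    have d: "Dist (shift \<alpha> S) \<beta> < Dist \<alpha> \<beta>" using Sne by (intro Dist_shift) (auto simp: S_def)
    have u1: "W r \<alpha> \<beta> = r \<alpha> S + W r (shift \<alpha> S) \<beta>" unfolding S_def by (rule W_unfold[of r, OF r0])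
    have ih: "W r (shift \<alpha> S) \<beta> = r (shift \<alpha> S) (I \<inter> T) + W r (shift (shift \<alpha> S) (I \<inter> T)) \<beta>"
      using less.hyps[OF d IT] .
    have u2: "W r (shift \<alpha> I) \<beta> = r (shift \<alpha> I) T + W r (shift (shift \<alpha> I) T) \<beta>"
      unfolding T_def by (rule W_unfold[of r, OF r0])
    have q: "r \<alpha> S + r (shift \<alpha> S) (I \<inter> T) = r \<alpha> I + r (shift \<alpha> I) T"
      using Qr[of \<alpha> I T] SIT by simp
    show ?thesis using u1 ih u2 q sh by simp
  qed
qed

lemma W_refl: "W r \<alpha> \<alpha> = 0" by (subst W.simps) (simp add: Sset_def)

lemma W_trans:
  fixes r :: "('a::finite \<Rightarrow> int) \<Rightarrow> 'a set \<Rightarrow> int"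
  assumes r0: "\<And>\<gamma>. r \<gamma> {} = 0"
    and Qr: "\<And>\<alpha> A B. r \<alpha> (A \<union> B) + r (shift \<alpha> (A \<union> B)) (A \<inter> B) = r \<alpha> A + r (shift \<alpha> A) B"
  shows "(\<forall>x. \<alpha> x \<le> \<beta> x) \<Longrightarrow> (\<forall>x. \<beta> x \<le> \<gamma> x) \<Longrightarrow> W r \<alpha> \<gamma> = W r \<alpha> \<beta> + W r \<beta> \<gamma>"
proof (induction "Dist \<alpha> \<beta>" arbitrary: \<alpha> rule: less_induct)
  case less
  show ?case
  proof (cases "Sset \<alpha> \<beta> = {}")
    case True
    have "\<alpha> = \<beta>"
    proof
      fix x
      have "\<not> \<alpha> x < \<beta> x" using True by (auto simp: Sset_def)
      moreover have "\<alpha> x \<le> \<beta> x" using less.prems by blast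
      ultimately show "\<alpha> x = \<beta> x" by linarith
    qed
    then show ?thesis by (simp add: W_refl)
  next
    case False
    define S where "S = Sset \<alpha> \<beta>"
    have sub: "S \<subseteq> Sset \<alpha> \<gamma>"
    proof
      fix x assume "x \<in> S"
      then have "\<alpha> x < \<beta> x" by (simp add: S_def Sset_def)
      moreover have "\<beta> x \<le> \<gamma> x" using less.prems by blast
      ultimately show "x \<in> Sset \<alpha> \<gamma>" by (simp add: Sset_def)
    qed
    have d: "Dist (shift \<alpha> S) \<beta> < Dist \<alpha> \<beta>" using False by (intro Dist_shift) (auto simp: S_def)
    have u1: "W r \<alpha> \<beta> = r \<alpha> S + W r (shift \<alpha> S) \<beta>" unfolding S_def by (rule W_unfold[of r, OF r0])
    have u2: "W r \<alpha> \<gamma> = r \<alpha> S + W r (shift \<alpha> S) \<gamma>" by (rule W_P[OF r0 Qr sub])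
    have le: "\<forall>x. shift \<alpha> S x \<le> \<beta> x"
    proof
      fix x
      have "\<alpha> x \<le> \<beta> x" using less.prems by blast
      then show "shift \<alpha> S x \<le> \<beta> x" by (simp add: S_def Sset_def shift_def)
    qed
    have ih: "W r (shift \<alpha> S) \<gamma> = W r (shift \<alpha> S) \<beta> + W r \<beta> \<gamma>"
      using less.hyps[OF d le] less.prems by blast
    show ?thesis using u1 u2 ih by simp
  qed
qed

definition base :: "nat \<Rightarrow> 'a \<Rightarrow> int" where "base k = (\<lambda>_. - int k)"
definition kk :: "('a::finite \<Rightarrow> int) \<Rightarrow> nat" where "kk \<gamma> = nat (- Min (range \<gamma>))"
definition G :: "(('a::finite \<Rightarrow> int) \<Rightarrow> 'a set \<Rightarrow> int) \<Rightarrow> int \<Rightarrow> ('a \<Rightarrow> int) \<Rightarrow> int" where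
  "G r d \<gamma> = W r (base (kk \<gamma>)) \<gamma> - int (kk \<gamma>) * d"

lemma kk_valid: "- int (kk \<gamma>) \<le> \<gamma> x"
proof -
  have "Min (range \<gamma>) \<le> \<gamma> x" by (rule Min_le) auto
  then show ?thesis unfolding kk_def by linarith
qed

context
  fixes r :: "('a::finite \<Rightarrow> int) \<Rightarrow> 'a set \<Rightarrow> int" and d :: int
  assumes r0: "\<And>\<gamma>. r \<gamma> {} = 0"
    and Qr: "\<And>\<alpha> A B. r \<alpha> (A \<union> B) + r (shift \<alpha> (A \<union> B)) (A \<inter> B) = r \<alpha> A + r (shift \<alpha> A) B"
    and rd: "\<And>\<alpha>. r \<alpha> UNIV = d"
begin

lemma lift: "(\<forall>x. - int k \<le> \<gamma> x) \<Longrightarrow> W r (base (Suc k)) \<gamma> = d + W r (base k) \<gamma>"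
proof -
  assume v: "\<forall>x. - int k \<le> \<gamma> x"
  have "UNIV \<subseteq> Sset (base (Suc k)) \<gamma>"
  proof
    fix x
    have "- int k \<le> \<gamma> x" using v by blast
    then show "x \<in> Sset (base (Suc k)) \<gamma>" by (simp add: Sset_def base_def)
  qed
  then have w: "W r (base (Suc k)) \<gamma> = r (base (Suc k)) UNIV + W r (shift (base (Suc k)) UNIV) \<gamma>"
    by (rule W_P[OF r0 Qr])
  have e: "shift (base (Suc k)) UNIV = base k" by (auto simp: shift_def base_def fun_eq_iff)
  show ?thesis using w rd by (simp add: e)
qed

lemma mono_k: assumes v: "\<forall>x. - int k \<le> \<gamma> x" and kk': "k \<le> k'" shows
   "W r (base k') \<gamma> - int k' * d = W r (base k) \<gamma> - int k * d"
  using kk'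
proof (induction k' rule: dec_induct)
  case base then show ?case by simp
next
  case (step n)
  have "\<forall>x. - int n \<le> \<gamma> x"
  proof
    fix x
    have "- int k \<le> \<gamma> x" using v by blast
    then show "- int n \<le> \<gamma> x" using step.hyps by linarith
  qed
  from lift[OF this] show ?case using step.IH by (simp add: algebra_simps)
qed

lemma G_any: "(\<forall>x. - int k \<le> \<gamma> x) \<Longrightarrow> G r d \<gamma> = W r (base k) \<gamma> - int k * d"
proof -
  assume v: "\<forall>x. - int k \<le> \<gamma> x"
  have v2: "\<forall>x. - int (kk \<gamma>) \<le> \<gamma> x" using kk_valid by blast
  have "W r (base (max k (kk \<gamma>))) \<gamma> - int (max k (kk \<gamma>)) * d = W r (base k) \<gamma> - int k * d"
    by (rule mono_k[OF v]) simp
  moreover have "W r (base (max k (kk \<gamma>))) \<gamma> - int (max k (kk \<gamma>)) * d = W r (base (kk \<gamma>)) \<gamma> - int (kk \<gamma>) * d"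
    by (rule mono_k[OF v2]) simp
  ultimately show ?thesis unfolding G_def by simp
qed

lemma G_shift: "G r d (shift \<gamma> I) = G r d \<gamma> + r \<gamma> I"
proof -
  define k where "k = kk \<gamma>"
  have v: "\<forall>x. - int k \<le> \<gamma> x" using kk_valid k_def by blast
  have v2: "\<forall>x. - int k \<le> shift \<gamma> I x"
  proof
    fix x
    have "- int k \<le> \<gamma> x" using v by blast
    then show "- int k \<le> shift \<gamma> I x" by (simp add: shift_def)
  qed
  have t: "W r (base k) (shift \<gamma> I) = W r (base k) \<gamma> + W r \<gamma> (shift \<gamma> I)"
    using v by (intro W_trans[OF r0 Qr]) (auto simp: base_def shift_def)
  have "I \<subseteq> Sset \<gamma> (shift \<gamma> I)" by (auto simp: Sset_def shift_def)
  from W_P[OF r0 Qr this] have "W r \<gamma> (shift \<gamma> I) = r \<gamma> I" by (simp add: W_refl)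
  then show ?thesis using G_any[OF v] G_any[OF v2] t by simp
qed

lemma G_zero: "G r d (\<lambda>_. 0) = 0"
proof -
  have "G r d (\<lambda>_. 0) = W r (base 0) (\<lambda>_. 0) - int 0 * d" by (rule G_any) simp
  then show ?thesis by (simp add: base_def W_refl)
qed

end

lemma uniq:
  fixes h :: "('a::finite \<Rightarrow> int) \<Rightarrow> int"
  assumes H: "\<And>\<alpha> I. h (shift \<alpha> I) = h \<alpha>"
  shows "h \<gamma> = h (\<lambda>_. 0)"
proof -
  have up: "(\<forall>x. \<alpha> x \<le> \<beta> x) \<Longrightarrow> h \<alpha> = h \<beta>" for \<alpha> \<beta> :: "'a \<Rightarrow> int"
  proof (induction "Dist \<alpha> \<beta>" arbitrary: \<alpha> rule: less_induct)
    case less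
    show ?case
    proof (cases "Sset \<alpha> \<beta> = {}")
      case True
      have "\<alpha> = \<beta>"
    proof
      fix x
      have "\<not> \<alpha> x < \<beta> x" using True by (auto simp: Sset_def)
      moreover have "\<alpha> x \<le> \<beta> x" using less.prems by blast
      ultimately show "\<alpha> x = \<beta> x" by linarith
    qed
      then show ?thesis by simp
    next
      case False
      have d: "Dist (shift \<alpha> (Sset \<alpha> \<beta>)) \<beta> < Dist \<alpha> \<beta>" using False by (intro Dist_shift) auto
      have le: "\<forall>x. shift \<alpha> (Sset \<alpha> \<beta>) x \<le> \<beta> x"
      proof
        fix x
        have "\<alpha> x \<le> \<beta> x" using less.prems by blast
        then show "shift \<alpha> (Sset \<alpha> \<beta>) x \<le> \<beta> x" by (simp add: Sset_def shift_def)
      qed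
      show ?thesis using less.hyps[OF d le] H by metis
    qed
  qed
  have b: "h (base k) = h (\<lambda>_. 0)" for k
  proof (induction k)
    case 0 then show ?case by (simp add: base_def)
  next
    case (Suc k)
    have "shift (base (Suc k)) UNIV = base k" by (auto simp: shift_def base_def fun_eq_iff)
    then show ?case using H[of "base (Suc k)" UNIV] Suc by metis
  qed
  have "h (base (kk \<gamma>)) = h \<gamma>" by (rule up) (simp add: base_def kk_valid)
  then show ?thesis using b by simp
qed


lemma pt_dec: "(f::'a::finite \<Rightarrow> int) j > 0 \<Longrightarrow>
  (\<Sum>x\<in>UNIV. nat ((f(j := f j - 1)) x)) < (\<Sum>x\<in>UNIV. nat (f x))"
  by (rule sum_strict_mono_ex1) auto

lemma locA:
  fixes g :: "('a::finite \<Rightarrow> int) \<Rightarrow> int"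
  assumes loc: "\<And>\<alpha> i j. i \<noteq> j \<Longrightarrow> g (shift \<alpha> {i,j}) + g \<alpha> \<le> g (shift \<alpha> {i}) + g (shift \<alpha> {j})"
  shows "(\<forall>x. v x \<ge> 0) \<Longrightarrow> v i = 0 \<Longrightarrow>
    g (shift (\<lambda>x. \<alpha> x + v x) {i}) + g \<alpha> \<le> g (shift \<alpha> {i}) + g (\<lambda>x. \<alpha> x + v x)"
proof (induction "\<Sum>x\<in>UNIV. nat (v x)" arbitrary: v rule: less_induct)
  case less
  show ?case
  proof (cases "\<forall>x. v x = 0")
    case True
    then have "(\<lambda>x. \<alpha> x + v x) = \<alpha>" by auto
    then show ?thesis by simp
  next
    case False
    then obtain j where j: "v j \<noteq> 0" by blast
    then have jp: "v j > 0" using less.prems by (metis order_le_less)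
    have ij: "i \<noteq> j" using j less.prems by auto
    define v' where "v' = v(j := v j - 1)"
    have d: "(\<Sum>x\<in>UNIV. nat (v' x)) < (\<Sum>x\<in>UNIV. nat (v x))" unfolding v'_def by (rule pt_dec[of v j, OF jp])
    have p1: "\<forall>x. v' x \<ge> 0" using less.prems jp by (auto simp: v'_def)
    have p2: "v' i = 0" using less.prems ij by (simp add: v'_def)
    have IH: "g (shift (\<lambda>x. \<alpha> x + v' x) {i}) + g \<alpha> \<le> g (shift \<alpha> {i}) + g (\<lambda>x. \<alpha> x + v' x)"
      using less.hyps[OF d p1 p2] .
    have L: "g (shift (\<lambda>x. \<alpha> x + v' x) {i,j}) + g (\<lambda>x. \<alpha> x + v' x) \<le>
        g (shift (\<lambda>x. \<alpha> x + v' x) {i}) + g (shift (\<lambda>x. \<alpha> x + v' x) {j})"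
      using loc[OF ij] .
    have e1: "shift (\<lambda>x. \<alpha> x + v' x) {j} = (\<lambda>x. \<alpha> x + v x)"
      by (auto simp: shift_def v'_def fun_eq_iff)
    have e2: "shift (\<lambda>x. \<alpha> x + v' x) {i,j} = shift (\<lambda>x. \<alpha> x + v x) {i}"
      using ij by (auto simp: shift_def v'_def fun_eq_iff)
    show ?thesis using IH L e1 e2 by simp
  qed
qed

lemma locB:
  fixes g :: "('a::finite \<Rightarrow> int) \<Rightarrow> int"
  assumes loc: "\<And>\<alpha> i j. i \<noteq> j \<Longrightarrow> g (shift \<alpha> {i,j}) + g \<alpha> \<le> g (shift \<alpha> {i}) + g (shift \<alpha> {j})"
    and v0: "\<forall>x. v x \<ge> 0"
  shows "(\<forall>x. u x \<ge> 0) \<Longrightarrow> (\<forall>x. u x = 0 \<or> v x = 0) \<Longrightarrow>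
    g (\<lambda>x. \<alpha> x + u x + v x) + g \<alpha> \<le> g (\<lambda>x. \<alpha> x + u x) + g (\<lambda>x. \<alpha> x + v x)"
proof (induction "\<Sum>x\<in>UNIV. nat (u x)" arbitrary: u rule: less_induct)
  case less
  show ?case
  proof (cases "\<forall>x. u x = 0")
    case True
    then show ?thesis by simp
  next
    case False
    then obtain i where i: "u i \<noteq> 0" by blast
    then have ip: "u i > 0" using less.prems by (metis order_le_less)
    have vi: "v i = 0" using less.prems i by blast
    define u' where "u' = u(i := u i - 1)"
    have d: "(\<Sum>x\<in>UNIV. nat (u' x)) < (\<Sum>x\<in>UNIV. nat (u x))" unfolding u'_def by (rule pt_dec[of u i, OF ip])
    have p1: "\<forall>x. u' x \<ge> 0" using less.prems ip by (auto simp: u'_def)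
    have p2: "\<forall>x. u' x = 0 \<or> v x = 0" using less.prems vi by (auto simp: u'_def)
    have IH: "g (\<lambda>x. \<alpha> x + u' x + v x) + g \<alpha> \<le> g (\<lambda>x. \<alpha> x + u' x) + g (\<lambda>x. \<alpha> x + v x)"
      using less.hyps[OF d p1 p2] .
    have A: "g (shift (\<lambda>x. (\<alpha> x + u' x) + v x) {i}) + g (\<lambda>x. \<alpha> x + u' x) \<le>
       g (shift (\<lambda>x. \<alpha> x + u' x) {i}) + g (\<lambda>x. (\<alpha> x + u' x) + v x)"
      by (rule locA[OF loc v0 vi])
    have e1: "shift (\<lambda>x. \<alpha> x + u' x + v x) {i} = (\<lambda>x. \<alpha> x + u x + v x)"
      by (auto simp: shift_def u'_def fun_eq_iff)
    have e2: "shift (\<lambda>x. \<alpha> x + u' x) {i} = (\<lambda>x. \<alpha> x + u x)"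
      by (auto simp: shift_def u'_def fun_eq_iff)
    show ?thesis using IH A e1 e2 by simp
  qed
qed

lemma submod:
  fixes g :: "('a::finite \<Rightarrow> int) \<Rightarrow> int"
  assumes loc: "\<And>\<alpha> i j. i \<noteq> j \<Longrightarrow> g (shift \<alpha> {i,j}) + g \<alpha> \<le> g (shift \<alpha> {i}) + g (shift \<alpha> {j})"
  shows "g (\<lambda>x. max (\<alpha> x) (\<beta> x)) + g (\<lambda>x. min (\<alpha> x) (\<beta> x)) \<le> g \<alpha> + g \<beta>"
proof -
  define m where "m = (\<lambda>x. min (\<alpha> x) (\<beta> x))"
  define u where "u = (\<lambda>x. \<alpha> x - m x)"
  define v where "v = (\<lambda>x. \<beta> x - m x)"
  have v0: "\<forall>x. v x \<ge> 0" "\<forall>x. u x \<ge> 0" "\<forall>x. u x = 0 \<or> v x = 0" by (auto simp: u_def v_def m_def)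
  have "g (\<lambda>x. m x + u x + v x) + g m \<le> g (\<lambda>x. m x + u x) + g (\<lambda>x. m x + v x)"
    by (rule locB[OF loc v0])
  moreover have "(\<lambda>x. m x + u x + v x) = (\<lambda>x. max (\<alpha> x) (\<beta> x))" by (auto simp: u_def v_def m_def fun_eq_iff)
  moreover have "(\<lambda>x. m x + u x) = \<alpha>" "(\<lambda>x. m x + v x) = \<beta>" by (auto simp: u_def v_def fun_eq_iff)
  ultimately show ?thesis by (simp add: m_def)
qed


lemma mrank_empty: "{} \<in> F \<Longrightarrow> mrank F ({}::'a::finite set) = 0"
proof -
  assume e: "{} \<in> F"
  have "mrank F ({}::'a set) = card ({}::'a set)" by (rule mrank_eqI[OF e]) auto
  then show ?thesis by simp
qed

lemma rank_pair:
  fixes Ind :: "('a::finite) set set"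
  assumes m: "matroid UNIV Ind"
  shows "mrank Ind {i, j} \<le> mrank Ind {i} + mrank Ind {j}"
proof -
  have e: "{} \<in> Ind" by (rule m_empty[OF m])
  obtain B where B: "B \<in> Ind" "B \<subseteq> {i,j}" "card B = mrank Ind {i,j}" using mrank_ex[OF e] by blast
  have "B = (B \<inter> {i}) \<union> (B \<inter> {j})" using B by auto
  then have "card B \<le> card (B \<inter> {i}) + card (B \<inter> {j})" by (metis card_Un_le)
  moreover have "card (B \<inter> {i}) \<le> mrank Ind {i}" using m_sub[OF m B(1)] by (intro mrank_ge[OF e]) auto
  moreover have "card (B \<inter> {j}) \<le> mrank Ind {j}" using m_sub[OF m B(1)] by (intro mrank_ge[OF e]) auto
  ultimately show ?thesis using B by linarith
qed

context
  fixes M :: "('a::finite \<Rightarrow> int) \<Rightarrow> 'a set set" and d :: nat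
  assumes fl: "matroid_flock d M"
begin

definition rr :: "('a \<Rightarrow> int) \<Rightarrow> 'a set \<Rightarrow> int" where "rr \<alpha> I = int (mrank (M \<alpha>) I)"

lemma mat: "matroid UNIV (M \<alpha>)" using fl unfolding matroid_flock_def by blast

lemma rr0: "rr \<gamma> {} = 0" unfolding rr_def using mrank_empty[OF m_empty[OF mat]] by simp

lemma rrd: "rr \<gamma> UNIV = int d" unfolding rr_def using fl unfolding matroid_flock_def by simp

lemma rrK1: "i \<notin> Y \<Longrightarrow> rr (shift \<gamma> {i}) Y + rr \<gamma> {i} = rr \<gamma> (insert i Y)"
proof -
  assume iY: "i \<notin> Y"
  have mc: "mcontract (M \<gamma>) i = mdelete (M (shift \<gamma> {i})) i" using fl unfolding matroid_flock_def by blast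
  have "{I \<in> mdelete (M (shift \<gamma> {i})) i. I \<subseteq> Y} = {I \<in> M (shift \<gamma> {i}). I \<subseteq> Y}"
    using iY unfolding mdelete_def by auto
  then have "mrank (M (shift \<gamma> {i})) Y = mrank (mcontract (M \<gamma>) i) Y" unfolding mc mrank_def by simp
  then show ?thesis using contract_rank[OF mat iY, of \<gamma>] unfolding rr_def by simp
qed

lemma rrQ: "rr \<alpha> (A \<union> B) + rr (shift \<alpha> (A \<union> B)) (A \<inter> B) = rr \<alpha> A + rr (shift \<alpha> A) B"
  by (rule Q[OF rr0 rrK1])

lemma gM_eq: "gM M = G rr (int d)"
proof -
  let ?P = "\<lambda>g. g (\<lambda>_. 0) = 0 \<and> (\<forall>\<alpha> I. g (shift \<alpha> I) = g \<alpha> + int (mrank (M \<alpha>) I))"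
  have PG: "?P (G rr (int d))"
    using G_zero[OF rr0 rrQ rrd] G_shift[OF rr0 rrQ rrd] unfolding rr_def by simp
  show ?thesis unfolding gM_def
  proof (rule the_equality[where P = ?P, OF PG])
    fix g assume Pg: "?P g"
    show "g = G rr (int d)"
    proof
      fix \<gamma>
      let ?h = "\<lambda>\<alpha>. g \<alpha> - G rr (int d) \<alpha>"
      have "?h (shift \<alpha> I) = ?h \<alpha>" for \<alpha> I using Pg PG by simp
      then have "?h \<gamma> = ?h (\<lambda>_. 0)" by (rule uniq)
      then show "g \<gamma> = G rr (int d) \<gamma>" using Pg PG by simp
    qed
  qed
qed

lemma gM_shift: "gM M (shift \<alpha> I) = gM M \<alpha> + rr \<alpha> I"
  unfolding gM_eq by (rule G_shift[OF rr0 rrQ rrd])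

lemma gM_loc: "i \<noteq> j \<Longrightarrow> gM M (shift \<alpha> {i,j}) + gM M \<alpha> \<le> gM M (shift \<alpha> {i}) + gM M (shift \<alpha> {j})"
  using gM_shift[of \<alpha> "{i,j}"] gM_shift[of \<alpha> "{i}"] gM_shift[of \<alpha> "{j}"] rank_pair[OF mat, of \<alpha> i j]
  unfolding rr_def by simp

end

theorem mainTheorem12:
  fixes M :: "('a::finite \<Rightarrow> int) \<Rightarrow> 'a set set" and d :: nat
  assumes "matroid_flock d M"
  shows "(\<forall>\<alpha> \<beta>. gM M \<alpha> + gM M \<beta> \<ge>
            gM M (\<lambda>x. max (\<alpha> x) (\<beta> x)) + gM M (\<lambda>x. min (\<alpha> x) (\<beta> x)))
       \<and> (\<forall>\<alpha>. gM M (shift \<alpha> UNIV) = gM M \<alpha> + int d)"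
proof (intro conjI allI)
  fix \<alpha> \<beta> :: "'a \<Rightarrow> int"
  show "gM M (\<lambda>x. max (\<alpha> x) (\<beta> x)) + gM M (\<lambda>x. min (\<alpha> x) (\<beta> x)) \<le> gM M \<alpha> + gM M \<beta>"
    by (rule submod) (rule gM_loc[OF assms])
next
  fix \<alpha> :: "'a \<Rightarrow> int"
  show "gM M (shift \<alpha> UNIV) = gM M \<alpha> + int d"
    using gM_shift[OF assms, of \<alpha> UNIV] rrd[OF assms] by simp
qed

end
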